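(* For each positive integer $N$, consider a lattice system with Hilbert space $\mathcal{H}^{(N)}=\bigotimes_{i=1}^N\mathcal{H}_i$, $\dim\mathcal{H}_i=d\ge2$ (so $D=d^N$), equipped with self-adjoint $\hat H^{(N)},\hat H'^{(N)}$, a density operator $\hat\rho^{0,(N)}$ and a unitary $\hat V^{(N)}$, such that: (A) the spectra $\{E_n\}$ of $\hat H^{(N)}$ and $\{E'_n\}$ of $\hat H'^{(N)}$ are non-degenerate; (B) if $E_k-E_l=E_m-E_n\ne0$ then $k=m$, $l=n$, and likewise for $\{E'_n\}$; and the effective dimension $D_{\mathrm{eff}}=\bigl[\sum_n(\rho^0_{nn})^2\bigr]^{-1}$ is exponentially large in $N$: there is $c>0$ with $D_{\mathrm{eff}}\ge e^{cN}$ for all $N$. Then the initial diagonal entropy $S_0$ and the time-averaged diagonal entropy after the operation $\overline{S'(\tau)}$ satisfy $S_0\lesssim\overline{S'(\tau)}$, i.e. $$\limsup_{N\to\infty}\frac{S_0-\overline{S'(\tau)}}{N}\le 0 .$$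
   Context: With $\{|E_n\rangle\}$, $\{|E'_n\rangle\}$ the eigenbases of $\hat H^{(N)},\hat H'^{(N)}$, $\rho^0_{kl}=\langle E_k|\hat\rho^{0,(N)}|E_l\rangle$, $U_{mn}=\langle E'_m|\hat V^{(N)}|E_n\rangle$, $\hbar>0$: $\rho'_{nn}(\tau)=\sum_{k,l}U_{nk}U_{nl}^*e^{-\mathrm{i}(E_k-E_l)\tau/\hbar}\rho^0_{kl}$, $S_0=-\sum_n\rho^0_{nn}\ln\rho^0_{nn}$, $S'(\tau)=-\sum_n\rho'_{nn}(\tau)\ln\rho'_{nn}(\tau)$ (convention $0\ln0=0$), and $\overline{F(\tau)}=\lim_{T\to\infty}T^{-1}\int_0^TF(\tau)d\tau$. The notation $\lesssim$ means $\le$ with terms sub-leading in $N$ ignored. *)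

theory Defs
  imports "HOL-Analysis.Analysis"
begin

text \<open>Finite-dimensional Hilbert space C^D, vectors as nat => complex (indices < D),
  operators as D x D matrices nat => nat => complex (indices < D).\<close>

type_synonym cvec = "nat \<Rightarrow> complex"
type_synonym cmat = "nat \<Rightarrow> nat \<Rightarrow> complex"

definition cinner :: "nat \<Rightarrow> cvec \<Rightarrow> cvec \<Rightarrow> complex" where
  "cinner D u v = (\<Sum>i<D. cnj (u i) * v i)"

definition mvec :: "nat \<Rightarrow> cmat \<Rightarrow> cvec \<Rightarrow> cvec" where
  "mvec D A v = (\<lambda>i. \<Sum>j<D. A i j * v j)"

definition self_adjoint :: "nat \<Rightarrow> cmat \<Rightarrow> bool" where
  "self_adjoint D A \<longleftrightarrow> (\<forall>i<D. \<forall>j<D. A j i = cnj (A i j))"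

definition unitary_mat :: "nat \<Rightarrow> cmat \<Rightarrow> bool" where
  "unitary_mat D A \<longleftrightarrow>
     (\<forall>i<D. \<forall>j<D. (\<Sum>k<D. cnj (A k i) * A k j) = (if i = j then 1 else 0)) \<and>
     (\<forall>i<D. \<forall>j<D. (\<Sum>k<D. A i k * cnj (A j k)) = (if i = j then 1 else 0))"

definition density_op :: "nat \<Rightarrow> cmat \<Rightarrow> bool" where
  "density_op D \<rho> \<longleftrightarrow> self_adjoint D \<rho> \<and>
     (\<forall>v. 0 \<le> Re (cinner D v (mvec D \<rho> v))) \<and>
     (\<Sum>i<D. \<rho> i i) = 1"

definition eigenbasis :: "nat \<Rightarrow> cmat \<Rightarrow> (nat \<Rightarrow> cvec) \<Rightarrow> (nat \<Rightarrow> real) \<Rightarrow> bool" where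
  "eigenbasis D A e E \<longleftrightarrow>
     (\<forall>m<D. \<forall>n<D. cinner D (e m) (e n) = (if m = n then 1 else 0)) \<and>
     (\<forall>n<D. mvec D A (e n) = (\<lambda>i. complex_of_real (E n) * e n i))"

definition melem :: "nat \<Rightarrow> cvec \<Rightarrow> cmat \<Rightarrow> cvec \<Rightarrow> complex" where
  "melem D u A v = cinner D u (mvec D A v)"

definition nondegenerate :: "nat \<Rightarrow> (nat \<Rightarrow> real) \<Rightarrow> bool" where
  "nondegenerate D E \<longleftrightarrow> inj_on E {..<D}"

definition nondegenerate_gaps :: "nat \<Rightarrow> (nat \<Rightarrow> real) \<Rightarrow> bool" where
  "nondegenerate_gaps D E \<longleftrightarrow>
     (\<forall>k<D. \<forall>l<D. \<forall>m<D. \<forall>n<D.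
        E k - E l = E m - E n \<and> E k - E l \<noteq> 0 \<longrightarrow> k = m \<and> l = n)"

text \<open>Shannon entropy of the diagonal p_0..p_{D-1}, with 0 ln 0 = 0
  (automatic since ln 0 = 0 in Isabelle).\<close>
definition diag_entropy :: "nat \<Rightarrow> (nat \<Rightarrow> real) \<Rightarrow> real" where
  "diag_entropy D p = - (\<Sum>n<D. p n * ln (p n))"

definition time_avg :: "(real \<Rightarrow> real) \<Rightarrow> real" where
  "time_avg F = Lim at_top (\<lambda>T. integral {0..T} F / T)"

end

theory Submission
  imports Defs "Jordan_Normal_Form.Determinant" "HOL-Real_Asymp.Real_Asymp"
begin


definition hasmean :: "(real \<Rightarrow> complex) \<Rightarrow> complex \<Rightarrow> bool" where
  "hasmean F m \<longleftrightarrow> ((\<lambda>T. integral {0..T} F / of_real T) \<longlongrightarrow> m) at_top"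

definition rmean :: "(real \<Rightarrow> real) \<Rightarrow> real \<Rightarrow> bool" where
  "rmean F m \<longleftrightarrow> ((\<lambda>T. integral {0..T} F / T) \<longlongrightarrow> m) at_top"

lemma rmean_time_avg: "rmean F m \<Longrightarrow> time_avg F = m"
  unfolding rmean_def time_avg_def by (simp add: tendsto_Lim)

lemma hasmean_add:
  assumes "continuous_on UNIV F" "continuous_on UNIV G" "hasmean F a" "hasmean G b"
  shows "hasmean (\<lambda>t. F t + G t) (a + b)"
proof -
  have "integral {0..T} (\<lambda>t. F t + G t) / of_real T = integral {0..T} F / of_real T + integral {0..T} G / of_real T" for T
  proof -
    have "F integrable_on {0..T}" "G integrable_on {0..T}"
      using integrable_continuous_real[OF continuous_on_subset[OF assms(1) subset_UNIV]]
        integrable_continuous_real[OF continuous_on_subset[OF assms(2) subset_UNIV]] by auto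
    thus ?thesis by (simp add: integral_add add_divide_distrib)
  qed
  thus ?thesis using assms(3,4) unfolding hasmean_def by (simp add: tendsto_add)
qed

lemma hasmean_cmult:
  assumes "hasmean F a"
  shows "hasmean (\<lambda>t. c * F t) (c * a)"
  using tendsto_mult_left[OF assms[unfolded hasmean_def], of c] unfolding hasmean_def
  by (simp add: integral_mult_right)

lemma hasmean_const: "hasmean (\<lambda>t. c) c"
proof -
  have "\<forall>\<^sub>F T in at_top. c = integral {0..T} (\<lambda>t. c) / of_real T"
    using eventually_gt_at_top[of "0::real"] by eventually_elim (simp add: scaleR_conv_of_real)
  thus ?thesis unfolding hasmean_def by (rule Lim_transform_eventually[OF tendsto_const])
qed

lemma hasmean_exp:
  assumes "w \<noteq> 0"
  shows "hasmean (\<lambda>t. exp (\<i> * of_real (w * t))) 0"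
proof -
  define P where "P = (\<lambda>t::real. exp (\<i> * of_real (w * t)) / (\<i> * of_real w))"
  define Q where "Q = (\<lambda>z::complex. exp (\<i> * (of_real w * z)) / (\<i> * of_real w))"
  have d0: "(Q has_field_derivative exp (\<i> * of_real (w * t))) (at (of_real t))" for t
  proof -
    have "((\<lambda>z. exp (\<i> * (of_real w * z))) has_field_derivative exp (\<i> * (of_real w * of_real t)) * (\<i> * of_real w)) (at (of_real t))"
      by (rule derivative_eq_intros refl | simp)+
    from DERIV_cdivide[OF this, of "\<i> * of_real w"] show ?thesis
      using assms unfolding Q_def by simp
  qed
  have PQ: "P = (\<lambda>t. Q (of_real t))" by (auto simp: P_def Q_def)
  have d: "(P has_vector_derivative exp (\<i> * of_real (w * t))) (at t within X)" for t X
    unfolding PQ by (rule has_vector_derivative_real_field[OF d0])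
  have I: "integral {0..T} (\<lambda>t. exp (\<i> * of_real (w * t))) = P T - P 0" if "T \<ge> 0" for T
    using fundamental_theorem_of_calculus[OF that d] by (simp add: integral_unique)
  have nP: "norm (P t) = 1 / \<bar>w\<bar>" for t
    by (simp add: P_def norm_divide norm_mult)
  have ev: "\<forall>\<^sub>F T in at_top. norm (integral {0..T} (\<lambda>t. exp (\<i> * of_real (w * t))) / of_real T) \<le> (2 / \<bar>w\<bar>) / T"
    using eventually_gt_at_top[of "0::real"]
  proof eventually_elim
    case (elim T)
    have "norm (P T - P 0) \<le> 2 / \<bar>w\<bar>"
      using norm_triangle_ineq4[of "P T" "P 0"] nP by simp
    note * = this
    have "norm (integral {0..T} (\<lambda>t. exp (\<i> * of_real (w * t))) / of_real T) = norm (P T - P 0) / T"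
      using elim I[of T] by (simp add: norm_divide)
    also have "\<dots> \<le> (2 / \<bar>w\<bar>) / T" by (rule divide_right_mono) (use * elim in auto)
    finally show ?case .
  qed
  have lim: "((\<lambda>T::real. (2 / \<bar>w\<bar>) / T) \<longlongrightarrow> 0) at_top"
    by (intro tendsto_divide_0[OF tendsto_const] filterlim_at_top_imp_at_infinity[OF filterlim_ident])
  show ?thesis unfolding hasmean_def by (rule Lim_null_comparison[OF ev lim])
qed

lemma hasmean_term:
  "hasmean (\<lambda>t. c * exp (\<i> * of_real (w * t))) (if w = 0 then c else 0)"
proof (cases "w = 0")
  case True thus ?thesis using hasmean_const[of c] by simp
next
  case False thus ?thesis using hasmean_cmult[OF hasmean_exp[OF False], of c] by simp
qed

lemma hasmean_sum:
  assumes "finite I"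
  shows "hasmean (\<lambda>t. \<Sum>i\<in>I. c i * exp (\<i> * of_real (w i * t))) (\<Sum>i\<in>I. if w i = 0 then c i else 0)"
  using assms
proof (induction I rule: finite_induct)
  case empty thus ?case using hasmean_const[of 0] by simp
next
  case (insert x F)
  have "hasmean (\<lambda>t. c x * exp (\<i> * of_real (w x * t)) + (\<Sum>i\<in>F. c i * exp (\<i> * of_real (w i * t))))
      ((if w x = 0 then c x else 0) + (\<Sum>i\<in>F. if w i = 0 then c i else 0))"
    by (rule hasmean_add[OF _ _ hasmean_term insert.IH]; intro continuous_intros)
  thus ?case using insert by simp
qed

lemma hasmean_rmean:
  assumes "continuous_on UNIV F" "hasmean F m"
  shows "rmean (\<lambda>t. Re (F t)) (Re m)"
proof -
  have eq: "integral {0..T} (\<lambda>t. Re (F t)) = Re (integral {0..T} F)" for T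
  proof -
    have "integral {0..T} (Re \<circ> F) = Re (integral {0..T} F)"
      by (rule integral_linear[OF integrable_continuous_real[OF continuous_on_subset[OF assms(1)]] bounded_linear_Re]) auto
    thus ?thesis by (simp add: o_def)
  qed
  show ?thesis using tendsto_Re[OF assms(2)[unfolded hasmean_def]] unfolding rmean_def
    by (simp add: eq Re_divide_of_real)
qed

lemma rmean_le:
  assumes "rmean f a" "rmean g b" "\<And>T. f integrable_on {0..T}" "\<And>T. g integrable_on {0..T}"
    "\<And>t. t \<ge> 0 \<Longrightarrow> f t \<le> g t"
  shows "a \<le> b"
proof -
  have ev: "\<forall>\<^sub>F T in at_top. integral {0..T} f / T \<le> integral {0..T} g / T"
    using eventually_gt_at_top[of "0::real"]
  proof eventually_elim
    case (elim T)
    have "integral {0..T} f \<le> integral {0..T} g"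
      by (rule integral_le[OF assms(3,4)]) (use assms(5) in auto)
    thus ?case using elim by (simp add: divide_right_mono)
  qed
  show ?thesis by (rule tendsto_le[OF _ assms(2)[unfolded rmean_def] assms(1)[unfolded rmean_def] ev]) simp
qed



definition tev :: "(real \<times> complex) list \<Rightarrow> real \<Rightarrow> complex" where
  "tev xs t = (\<Sum>(w,c)\<leftarrow>xs. c * exp (\<i> * of_real (w * t)))"

definition tpoly :: "(real \<Rightarrow> complex) \<Rightarrow> bool" where
  "tpoly F \<longleftrightarrow> (\<exists>xs. F = tev xs)"

lemma tev_Nil[simp]: "tev [] t = 0" by (simp add: tev_def)
lemma tev_Cons[simp]: "tev ((w,c)#xs) t = c * exp (\<i> * of_real (w * t)) + tev xs t"
  by (simp add: tev_def)
lemma tev_append[simp]: "tev (xs @ ys) t = tev xs t + tev ys t" by (simp add: tev_def)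

lemma tev_scale: "tev (map (\<lambda>(w,c). (w, a * c)) xs) t = a * tev xs t"
  by (induction xs) (auto simp: algebra_simps)

definition tprod :: "(real \<times> complex) list \<Rightarrow> (real \<times> complex) list \<Rightarrow> (real \<times> complex) list" where
  "tprod xs ys = concat (map (\<lambda>(w,c). map (\<lambda>(v,d). (w + v, c * d)) ys) xs)"

lemma tev_single_prod: "tev (map (\<lambda>(v,d). (w + v, c * d)) ys) t = c * exp (\<i> * of_real (w * t)) * tev ys t"
  by (induction ys) (auto simp: algebra_simps exp_add)

lemma tev_prod: "tev (tprod xs ys) t = tev xs t * tev ys t"
  by (induction xs) (auto simp: tprod_def tev_single_prod algebra_simps)

lemma tpoly_const: "tpoly (\<lambda>t. c)"
  unfolding tpoly_def by (rule exI[of _ "[(0,c)]"]) (auto simp: fun_eq_iff)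

lemma tpoly_term: "tpoly (\<lambda>t. c * exp (\<i> * of_real (w * t)))"
  unfolding tpoly_def by (rule exI[of _ "[(w,c)]"]) (auto simp: fun_eq_iff)

lemma tpoly_add: "tpoly F \<Longrightarrow> tpoly G \<Longrightarrow> tpoly (\<lambda>t. F t + G t)"
  unfolding tpoly_def
proof (elim exE)
  fix xs ys assume "F = tev xs" "G = tev ys"
  thus "\<exists>zs. (\<lambda>t. F t + G t) = tev zs" by (intro exI[of _ "xs @ ys"]) (auto simp: fun_eq_iff)
qed

lemma tpoly_mult: "tpoly F \<Longrightarrow> tpoly G \<Longrightarrow> tpoly (\<lambda>t. F t * G t)"
  unfolding tpoly_def
proof (elim exE)
  fix xs ys assume "F = tev xs" "G = tev ys"
  thus "\<exists>zs. (\<lambda>t. F t * G t) = tev zs" by (intro exI[of _ "tprod xs ys"]) (auto simp: fun_eq_iff tev_prod)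
qed

lemma tpoly_scale: "tpoly F \<Longrightarrow> tpoly (\<lambda>t. a * F t)"
  using tpoly_mult[OF tpoly_const] by blast

lemma tpoly_sum: "finite I \<Longrightarrow> (\<And>i. i \<in> I \<Longrightarrow> tpoly (f i)) \<Longrightarrow> tpoly (\<lambda>t. \<Sum>i\<in>I. f i t)"
  by (induction I rule: finite_induct) (auto intro: tpoly_add tpoly_const)

lemma tev_cont: "continuous_on UNIV (tev xs)"
proof (induction xs)
  case Nil thus ?case by (simp add: tev_def continuous_on_const)
next
  case (Cons a xs)
  obtain w c where a: "a = (w,c)" by fastforce
  have "continuous_on UNIV (\<lambda>t. c * exp (\<i> * of_real (w * t)) + tev xs t)"
    by (intro continuous_intros Cons)
  thus ?case by (simp add: a)
qed

lemma tev_mean: "\<exists>m. hasmean (tev xs) m"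
proof (induction xs)
  case Nil thus ?case using hasmean_const[of 0] by (auto simp: tev_def)
next
  case (Cons a xs)
  obtain w c where a: "a = (w,c)" by fastforce
  from Cons obtain m where m: "hasmean (tev xs) m" by blast
  have "hasmean (\<lambda>t. c * exp (\<i> * of_real (w * t)) + tev xs t) ((if w = 0 then c else 0) + m)"
    by (rule hasmean_add[OF _ tev_cont hasmean_term m]) (intro continuous_intros)
  thus ?case by (auto simp: a)
qed

lemma tpoly_cont: "tpoly F \<Longrightarrow> continuous_on UNIV F"
  unfolding tpoly_def using tev_cont by auto

lemma tpoly_mean: "tpoly F \<Longrightarrow> \<exists>m. hasmean F m"
  unfolding tpoly_def using tev_mean by auto

lemma tpoly_poly:
  fixes P :: "real \<Rightarrow> real"
  assumes "real_polynomial_function P" "tpoly F" "\<And>t. F t \<in> \<real>"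
  shows "tpoly (\<lambda>t. of_real (P (Re (F t))))"
  using assms(1)
proof (induction P rule: real_polynomial_function.induct)
  case (linear f)
  then obtain a where f: "f = (\<lambda>x. x * a)" using real_bounded_linear by blast
  have "(\<lambda>t. complex_of_real (f (Re (F t)))) = (\<lambda>t. of_real a * F t)"
    using assms(3) by (auto simp: f fun_eq_iff mult.commute)
  thus ?case using tpoly_scale[OF assms(2)] by simp
next
  case (const c) thus ?case using tpoly_const by simp
next
  case (add f g) thus ?case using tpoly_add by fastforce
next
  case (mult f g) thus ?case using tpoly_mult by fastforce
qed

lemma rmean_add:
  assumes "rmean f a" "rmean g b" "\<And>T. f integrable_on {0..T}" "\<And>T. g integrable_on {0..T}"
  shows "rmean (\<lambda>t. f t + g t) (a + b)"
proof -
  have "integral {0..T} (\<lambda>t. f t + g t) / T = integral {0..T} f / T + integral {0..T} g / T" for T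
    using assms(3,4) by (simp add: integral_add add_divide_distrib)
  thus ?thesis using assms(1,2) unfolding rmean_def by (simp add: tendsto_add)
qed

lemma rmean_uniform:
  fixes f :: "real \<Rightarrow> real"
  assumes fi: "\<And>T. f integrable_on {0..T}"
    and ap: "\<And>e. e > 0 \<Longrightarrow> \<exists>g m. rmean g m \<and> (\<forall>T. g integrable_on {0..T}) \<and> (\<forall>t\<ge>0. \<bar>f t - g t\<bar> \<le> e)"
  shows "\<exists>m. rmean f m"
proof -
  have "\<forall>j::nat. \<exists>g m. rmean g m \<and> (\<forall>T. g integrable_on {0..T}) \<and> (\<forall>t\<ge>0. \<bar>f t - g t\<bar> \<le> 1 / Suc j)"
    using ap by simp
  then obtain G M where GM: "\<And>j. rmean (G j) (M j)" "\<And>j T. G j integrable_on {0..T}"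
    "\<And>j t. t \<ge> 0 \<Longrightarrow> \<bar>f t - G j t\<bar> \<le> 1 / Suc j"
    by metis
  define A where "A = (\<lambda>h T. integral {0..T} h / (T::real))"
  have cl1: "\<bar>A f T - A (G j) T\<bar> \<le> 1 / Suc j" if T: "T > 0" for T j
  proof -
    let ?e = "1 / real (Suc j)"
    have i1: "integral {0..T} f \<le> integral {0..T} (\<lambda>t. G j t + ?e)"
      by (rule integral_le) (use fi GM T in \<open>auto intro!: integrable_add\<close>, smt (verit) GM(3) atLeastAtMost_iff)
    have i2: "integral {0..T} (\<lambda>t. G j t - ?e) \<le> integral {0..T} f"
      by (rule integral_le) (use fi GM T in \<open>auto intro!: integrable_diff\<close>, smt (verit) GM(3) atLeastAtMost_iff)
    have e1: "integral {0..T} (\<lambda>t. G j t + ?e) = integral {0..T} (G j) + T * ?e"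
    proof -
      have "integral {0..T} (\<lambda>t. G j t + ?e) = integral {0..T} (G j) + integral {0..T} (\<lambda>t. ?e)"
        by (rule integral_add[OF GM(2)]) (rule integrable_const_ivl)
      thus ?thesis using T by simp
    qed
    have e2: "integral {0..T} (\<lambda>t. G j t - ?e) = integral {0..T} (G j) - T * ?e"
    proof -
      have "integral {0..T} (\<lambda>t. G j t - ?e) = integral {0..T} (G j) - integral {0..T} (\<lambda>t. ?e)"
        by (rule integral_diff[OF GM(2)]) (rule integrable_const_ivl)
      thus ?thesis using T by simp
    qed
    have "\<bar>integral {0..T} f - integral {0..T} (G j)\<bar> \<le> T * ?e"
      using i1 i2 e1 e2 by linarith
    hence "\<bar>integral {0..T} f - integral {0..T} (G j)\<bar> / T \<le> ?e"
      using T by (simp add: divide_le_eq mult.commute)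
    thus ?thesis using T by (simp add: A_def diff_divide_distrib[symmetric] )
  qed
  have cl2: "\<bar>M i - M j\<bar> \<le> 1 / Suc i + 1 / Suc j" for i j
  proof -
    have lim: "((\<lambda>T. \<bar>A (G i) T - A (G j) T\<bar>) \<longlongrightarrow> \<bar>M i - M j\<bar>) at_top"
      using GM(1)[of i] GM(1)[of j] unfolding rmean_def A_def by (intro tendsto_intros)
    have "\<forall>\<^sub>F T in at_top. \<bar>A (G i) T - A (G j) T\<bar> \<le> 1 / Suc i + 1 / Suc j"
      using eventually_gt_at_top[of "0::real"]
    proof eventually_elim
      case (elim T) thus ?case using cl1[OF elim, of i] cl1[OF elim, of j] by linarith
    qed
    thus ?thesis by (rule tendsto_upperbound[OF lim]) simp
  qed
  have "Cauchy M"
  proof (rule metric_CauchyI)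
    fix e :: real assume e: "e > 0"
    obtain N :: nat where N: "1 / Suc N < e / 2"
      using reals_Archimedean[of "e/2"] e by (metis half_gt_zero inverse_eq_divide of_nat_Suc)
    show "\<exists>N. \<forall>m\<ge>N. \<forall>n\<ge>N. dist (M m) (M n) < e"
    proof (intro exI allI impI)
      fix m n assume "m \<ge> N" "n \<ge> N"
      hence "1 / real (Suc m) \<le> 1 / Suc N" "1 / real (Suc n) \<le> 1 / Suc N"
        by (auto intro!: divide_left_mono)
      thus "dist (M m) (M n) < e" using cl2[of m n] N by (simp add: dist_real_def)
    qed
  qed
  then obtain m where Mm: "M \<longlonglongrightarrow> m" using Cauchy_convergent_iff convergent_def by blast
  have "(A f \<longlongrightarrow> m) at_top"
  proof (rule tendstoI)
    fix e :: real assume e: "e > 0"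
    have "\<forall>\<^sub>F j in sequentially. dist (M j) m < e / 3" using Mm e tendstoD[of M m sequentially "e/3"] by simp
    moreover have "\<forall>\<^sub>F j in sequentially. 1 / real (Suc j) < e / 3"
    proof -
      have l: "((\<lambda>j. 1 / real (Suc j)) \<longlongrightarrow> 0) sequentially" by (rule LIMSEQ_Suc[OF lim_const_over_n]) 
      show ?thesis using e tendstoD[OF l, of "e/3"] by simp
    qed
    ultimately have "\<forall>\<^sub>F j in sequentially. dist (M j) m < e / 3 \<and> 1 / real (Suc j) < e / 3"
      by eventually_elim auto
    then obtain j where j: "dist (M j) m < e / 3" "1 / real (Suc j) < e / 3"
      by (auto simp: eventually_sequentially)
    have "\<forall>\<^sub>F T in at_top. dist (A (G j) T) (M j) < e / 3"
      using GM(1)[of j] e tendstoD[of "A (G j)" "M j" at_top "e/3"] unfolding rmean_def A_def by simp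
    with eventually_gt_at_top[of "0::real"]
    show "\<forall>\<^sub>F T in at_top. dist (A f T) m < e"
    proof eventually_elim
      case (elim T)
      thus ?case using cl1[OF elim(1), of j] j unfolding dist_real_def by linarith
    qed
  qed
  thus ?thesis unfolding rmean_def A_def by blast
qed

lemma xlnx_cont: "continuous_on {0..} (\<lambda>x::real. x * ln x)"
  unfolding continuous_on_def
proof
  fix x :: real assume "x \<in> {0..}"
  show "((\<lambda>x. x * ln x) \<longlongrightarrow> x * ln x) (at x within {0..})"
  proof (cases "x = 0")
    case True
    have "((\<lambda>x::real. x * ln x) \<longlongrightarrow> 0) (at_right 0)" by real_asymp
    thus ?thesis using True by (simp add: at_within_Ici_at_right)
  next
    case False
    hence "isCont (\<lambda>x. x * ln x) x" using \<open>x \<in> {0..}\<close> by (intro continuous_intros) auto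
    thus ?thesis using continuous_at_imp_continuous_within[of x "\<lambda>x. x * ln x" "{0..}"]
      by (simp add: continuous_within)
  qed
qed



definition ONB :: "nat \<Rightarrow> (nat \<Rightarrow> cvec) \<Rightarrow> bool" where
 "ONB D f \<longleftrightarrow> (\<forall>m<D. \<forall>n<D. cinner D (f m) (f n) = (if m = n then 1 else 0))"

lemma ONB_complete:
  assumes "ONB D f" "i < D" "j < D"
  shows "(\<Sum>n<D. f n i * cnj (f n j)) = (if i = j then 1 else 0)"
proof -
  define A where "A = mat D D (\<lambda>(n,i). cnj (f n i))"
  define B where "B = mat D D (\<lambda>(i,m). f m i)"
  have AB: "A * B = 1\<^sub>m D"
    using assms(1) by (auto simp: ONB_def A_def B_def scalar_prod_def cinner_def lessThan_atLeast0 intro!: eq_matI)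
  have "B * A = 1\<^sub>m D" 
    by (rule mat_mult_left_right_inverse[OF _ _ AB]) (auto simp: A_def B_def)
  hence "(B * A) $$ (i,j) = 1\<^sub>m D $$ (i,j)" by simp
  thus ?thesis using assms(2,3) by (simp add: A_def B_def scalar_prod_def lessThan_atLeast0)
qed


lemma sum_swap3: "(\<Sum>n\<in>A. \<Sum>j\<in>B. \<Sum>i\<in>C. f n j i) = (\<Sum>j\<in>B. \<Sum>i\<in>C. \<Sum>n\<in>A. f n j i)"
proof -
  have "(\<Sum>n\<in>A. \<Sum>j\<in>B. \<Sum>i\<in>C. f n j i) = (\<Sum>j\<in>B. \<Sum>n\<in>A. \<Sum>i\<in>C. f n j i)"
    by (rule sum.swap)
  also have "\<dots> = (\<Sum>j\<in>B. \<Sum>i\<in>C. \<Sum>n\<in>A. f n j i)"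
    by (rule sum.cong[OF refl], rule sum.swap)
  finally show ?thesis .
qed

lemma parseval:
  assumes "ONB D f"
  shows "(\<Sum>n<D. cinner D (f n) w * cnj (cinner D (f n) w)) = (\<Sum>i<D. w i * cnj (w i))"
proof -
  have "(\<Sum>n<D. cinner D (f n) w * cnj (cinner D (f n) w))
      = (\<Sum>n<D. \<Sum>j<D. \<Sum>i<D. (w i * cnj (w j)) * (f n j * cnj (f n i)))"
    by (simp add: cinner_def sum_distrib_left sum_distrib_right mult_ac)
  also have "\<dots> = (\<Sum>j<D. \<Sum>i<D. (w i * cnj (w j)) * (\<Sum>n<D. f n j * cnj (f n i)))"
    by (subst sum_swap3) (simp add: sum_distrib_left)
  also have "\<dots> = (\<Sum>j<D. \<Sum>i<D. (w i * cnj (w j)) * (if j = i then 1 else 0))"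
    using ONB_complete[OF assms] by simp
  also have "\<dots> = (\<Sum>j<D. w j * cnj (w j))"
    by (simp add: if_distrib sum.delta' cong: if_cong)
  finally show ?thesis .
qed

lemma unitary_norm1:
  assumes "unitary_mat D V"
  shows "(\<Sum>i<D. mvec D V v i * cnj (mvec D V v i)) = (\<Sum>j<D. v j * cnj (v j))"
proof -
  have "(\<Sum>i<D. mvec D V v i * cnj (mvec D V v i))
      = (\<Sum>i<D. \<Sum>k<D. \<Sum>j<D. (v j * cnj (v k)) * (cnj (V i k) * V i j))"
    by (simp add: mvec_def sum_distrib_left sum_distrib_right mult_ac)
  also have "\<dots> = (\<Sum>k<D. \<Sum>j<D. (v j * cnj (v k)) * (\<Sum>i<D. cnj (V i k) * V i j))"
    by (subst sum_swap3) (simp add: sum_distrib_left)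
  also have "\<dots> = (\<Sum>k<D. \<Sum>j<D. (v j * cnj (v k)) * (if k = j then 1 else 0))"
    using assms by (simp add: unitary_mat_def)
  also have "\<dots> = (\<Sum>k<D. v k * cnj (v k))"
    by (simp add: if_distrib sum.delta' cong: if_cong)
  finally show ?thesis .
qed



lemma quad_psd:
  fixes a c :: real and z :: complex
  assumes Q: "\<And>s t. 0 \<le> Re (cnj s * s * a + cnj s * t * z + cnj t * s * cnj z + cnj t * t * c)"
    and a: "a \<ge> 0" and c: "c \<ge> 0"
  shows "(cmod z)^2 \<le> a * c"
proof (cases "c > 0")
  case True
  have "0 \<le> Re (cnj (of_real c) * of_real c * a + cnj (of_real c) * (- cnj z) * z + cnj (- cnj z) * of_real c * cnj z + cnj (- cnj z) * (- cnj z) * c)"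
    by (rule Q)
  also have "\<dots> = c * (a * c - (cmod z)^2)"
    by (simp add: cmod_power2[unfolded power2_eq_square] algebra_simps power2_eq_square)
  finally show ?thesis using True by (simp add: zero_le_mult_iff)
next
  case False
  hence c0: "c = 0" using c by simp
  show ?thesis
  proof (rule ccontr)
    assume "\<not> ?thesis"
    hence z: "(cmod z)^2 > 0" using c0 by simp
    define l where "l = (a + 1) / (cmod z)^2"
    have "0 \<le> Re (cnj 1 * 1 * a + cnj 1 * (- of_real l * cnj z) * z + cnj (- of_real l * cnj z) * 1 * cnj z + cnj (- of_real l * cnj z) * (- of_real l * cnj z) * c)"
      by (rule Q)
    also have "\<dots> = a - 2 * l * (cmod z)^2"
      using c0 by (simp add: cmod_power2[unfolded power2_eq_square] algebra_simps power2_eq_square)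
    also have "\<dots> = a - 2 * (a + 1)" using z by (simp add: l_def)
    finally show False using a by simp
  qed
qed

definition adj :: "cmat \<Rightarrow> cmat" where "adj A = (\<lambda>i j. cnj (A j i))"

lemma unitary_adj: "unitary_mat D V \<Longrightarrow> unitary_mat D (adj V)"
  by (simp add: unitary_mat_def adj_def)

lemma melem_adj: "melem D u V v = cnj (melem D v (adj V) u)"
proof -
  have "melem D u V v = (\<Sum>i<D. \<Sum>j<D. cnj (u i) * V i j * v j)"
    by (simp add: melem_def cinner_def mvec_def sum_distrib_left mult_ac)
  also have "\<dots> = (\<Sum>j<D. \<Sum>i<D. cnj (u i) * V i j * v j)" by (rule sum.swap)
  also have "\<dots> = cnj (melem D v (adj V) u)"
    by (simp add: melem_def cinner_def mvec_def adj_def sum_distrib_left mult_ac)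
  finally show ?thesis .
qed

lemma melem_sa: "self_adjoint D A \<Longrightarrow> melem D v A u = cnj (melem D u A v)"
proof -
  assume sa: "self_adjoint D A"
  have "melem D v A u = (\<Sum>i<D. \<Sum>j<D. cnj (v i) * A i j * u j)"
    by (simp add: melem_def cinner_def mvec_def sum_distrib_left mult_ac)
  also have "\<dots> = (\<Sum>j<D. \<Sum>i<D. cnj (v i) * A i j * u j)" by (rule sum.swap)
  also have "\<dots> = (\<Sum>j<D. \<Sum>i<D. cnj (cnj (u j) * A j i * v i))"
  proof (intro sum.cong refl)
    fix i j assume "i \<in> {..<D}" "j \<in> {..<D}"
    moreover have "\<forall>i<D. \<forall>j<D. A j i = cnj (A i j)" using sa by (simp only: self_adjoint_def)
    ultimately have "A i j = cnj (A j i)" by blast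
    thus "cnj (v i) * A i j * u j = cnj (cnj (u j) * A j i * v i)" by simp
  qed
  also have "\<dots> = cnj (melem D u A v)"
    by (simp add: melem_def cinner_def mvec_def sum_distrib_left mult_ac)
  finally show ?thesis .
qed

lemma cinner_lincomb_left: "cinner D (\<lambda>i. \<Sum>k<D. a k * f k i) w = (\<Sum>k<D. cnj (a k) * cinner D (f k) w)"
proof -
  have "cinner D (\<lambda>i. \<Sum>k<D. a k * f k i) w = (\<Sum>i<D. \<Sum>k<D. cnj (a k) * (cnj (f k i) * w i))"
    by (simp add: cinner_def sum_distrib_left sum_distrib_right mult_ac)
  also have "\<dots> = (\<Sum>k<D. \<Sum>i<D. cnj (a k) * (cnj (f k i) * w i))" by (rule sum.swap)
  finally show ?thesis by (simp add: cinner_def sum_distrib_left)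
qed

lemma cinner_lincomb_right: "cinner D u (\<lambda>i. \<Sum>l<D. b l * w l i) = (\<Sum>l<D. b l * cinner D u (w l))"
proof -
  have "cinner D u (\<lambda>i. \<Sum>l<D. b l * w l i) = (\<Sum>i<D. \<Sum>l<D. b l * (cnj (u i) * w l i))"
    by (simp add: cinner_def sum_distrib_left mult_ac)
  also have "\<dots> = (\<Sum>l<D. \<Sum>i<D. b l * (cnj (u i) * w l i))" by (rule sum.swap)
  finally show ?thesis by (simp add: cinner_def sum_distrib_left)
qed

lemma mvec_lincomb: "mvec D A (\<lambda>j. \<Sum>l<D. b l * f l j) = (\<lambda>i. \<Sum>l<D. b l * mvec D A (f l) i)"
proof
  fix i
  have "mvec D A (\<lambda>j. \<Sum>l<D. b l * f l j) i = (\<Sum>j<D. \<Sum>l<D. b l * (A i j * f l j))"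
    by (simp add: mvec_def sum_distrib_left mult_ac)
  also have "\<dots> = (\<Sum>l<D. \<Sum>j<D. b l * (A i j * f l j))" by (rule sum.swap)
  finally show "mvec D A (\<lambda>j. \<Sum>l<D. b l * f l j) i = (\<Sum>l<D. b l * mvec D A (f l) i)"
    by (simp add: mvec_def sum_distrib_left)
qed

lemma melem_lincomb:
  "melem D (\<lambda>i. \<Sum>k<D. a k * f k i) A (\<lambda>j. \<Sum>l<D. b l * f l j)
     = (\<Sum>k<D. \<Sum>l<D. cnj (a k) * melem D (f k) A (f l) * b l)"
proof -
  have "melem D (\<lambda>i. \<Sum>k<D. a k * f k i) A (\<lambda>j. \<Sum>l<D. b l * f l j)
     = cinner D (\<lambda>i. \<Sum>k<D. a k * f k i) (\<lambda>i. \<Sum>l<D. b l * mvec D A (f l) i)"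
    by (simp only: melem_def mvec_lincomb)
  also have "\<dots> = (\<Sum>k<D. cnj (a k) * cinner D (f k) (\<lambda>i. \<Sum>l<D. b l * mvec D A (f l) i))"
    by (rule cinner_lincomb_left)
  also have "\<dots> = (\<Sum>k<D. cnj (a k) * (\<Sum>l<D. b l * cinner D (f k) (mvec D A (f l))))"
    by (simp only: cinner_lincomb_right)
  also have "\<dots> = (\<Sum>k<D. \<Sum>l<D. cnj (a k) * melem D (f k) A (f l) * b l)"
    by (simp add: sum_distrib_left melem_def mult_ac)
  finally show ?thesis .
qed

lemma col_sum:
  assumes "ONB D e" "ONB D e'" "unitary_mat D V" "k < D"
  shows "(\<Sum>n<D. melem D (e' n) V (e k) * cnj (melem D (e' n) V (e k))) = 1"
proof -
  have "(\<Sum>n<D. melem D (e' n) V (e k) * cnj (melem D (e' n) V (e k)))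
      = (\<Sum>i<D. mvec D V (e k) i * cnj (mvec D V (e k) i))"
    unfolding melem_def by (rule parseval[OF assms(2)])
  also have "\<dots> = (\<Sum>j<D. e k j * cnj (e k j))" by (rule unitary_norm1[OF assms(3)])
  also have "\<dots> = cinner D (e k) (e k)" by (simp add: cinner_def mult.commute)
  also have "\<dots> = 1" using assms(1,4) by (simp add: ONB_def)
  finally show ?thesis .
qed

lemma row_sum:
  assumes "ONB D e" "ONB D e'" "unitary_mat D V" "n < D"
  shows "(\<Sum>k<D. melem D (e' n) V (e k) * cnj (melem D (e' n) V (e k))) = 1"
proof -
  have "(\<Sum>k<D. melem D (e' n) V (e k) * cnj (melem D (e' n) V (e k)))
      = (\<Sum>k<D. cinner D (e k) (mvec D (adj V) (e' n)) * cnj (cinner D (e k) (mvec D (adj V) (e' n))))"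
  proof -
    have eq: "melem D (e' n) V (e k) = cnj (cinner D (e k) (mvec D (adj V) (e' n)))" for k
      using melem_adj[of D "e' n" V "e k"] by (simp add: melem_def)
    show ?thesis by (simp only: eq complex_cnj_cnj mult.commute)
  qed
  also have "\<dots> = (\<Sum>i<D. mvec D (adj V) (e' n) i * cnj (mvec D (adj V) (e' n) i))"
    by (rule parseval[OF assms(1)])
  also have "\<dots> = (\<Sum>j<D. e' n j * cnj (e' n j))" by (rule unitary_norm1[OF unitary_adj[OF assms(3)]])
  also have "\<dots> = cinner D (e' n) (e' n)" by (simp add: cinner_def mult.commute)
  also have "\<dots> = 1" using assms(2,4) by (simp add: ONB_def)
  finally show ?thesis .
qed

lemma trace_basis:
  assumes "ONB D e"
  shows "(\<Sum>k<D. melem D (e k) A (e k)) = (\<Sum>i<D. A i i)"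
proof -
  have "(\<Sum>k<D. melem D (e k) A (e k)) = (\<Sum>k<D. \<Sum>i<D. \<Sum>j<D. A i j * (e k j * cnj (e k i)))"
    by (simp add: melem_def cinner_def mvec_def sum_distrib_left mult_ac)
  also have "\<dots> = (\<Sum>i<D. \<Sum>j<D. A i j * (\<Sum>k<D. e k j * cnj (e k i)))"
    by (subst sum_swap3) (simp add: sum_distrib_left)
  also have "\<dots> = (\<Sum>i<D. \<Sum>j<D. A i j * (if j = i then 1 else 0))"
    using ONB_complete[OF assms] by simp
  also have "\<dots> = (\<Sum>i<D. A i i)"
    by (simp add: if_distrib sum.delta' cong: if_cong)
  finally show ?thesis .
qed



lemma sum_ind_r: "k < (D::nat) \<Longrightarrow> (\<Sum>l<D. f l * (if l = k then c else 0)) = f k * (c::complex)"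
proof -
  assume k: "k < D"
  have "(\<Sum>l<D. f l * (if l = k then c else 0)) = (\<Sum>l<D. if l = k then f k * c else 0)"
    by (rule sum.cong) auto
  thus ?thesis using k by (simp add: sum.delta)
qed

lemma sum_ind_l: "k < (D::nat) \<Longrightarrow> (\<Sum>l<D. (if l = k then c else 0) * f l) = c * (f k::complex)"
proof -
  assume k: "k < D"
  have "(\<Sum>l<D. (if l = k then c else 0) * f l) = (\<Sum>l<D. if l = k then c * f k else 0)"
    by (rule sum.cong) auto
  thus ?thesis using k by (simp add: sum.delta)
qed


locale fixedN =
  fixes D :: nat and rho V :: cmat and e e' :: "nat \<Rightarrow> cvec" and E :: "nat \<Rightarrow> real" and hbar :: real
  assumes hbar: "hbar > 0" and dens: "density_op D rho" and unit: "unitary_mat D V"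
    and ONe: "ONB D e" and ONe': "ONB D e'" and injE: "inj_on E {..<D}" and gaps: "nondegenerate_gaps D E"
begin

definition r where "r k l = melem D (e k) rho (e l)"
definition U where "U n k = melem D (e' n) V (e k)"
definition x where "x k = Re (r k k)"
definition W where "W n k = (cmod (U n k))^2"
definition q where "q n = (\<Sum>k<D. W n k * x k)"
definition a where "a n k l = U n k * cnj (U n l) * r k l"
definition Fn where "Fn n t = (\<Sum>k<D. \<Sum>l<D. U n k * cnj (U n l) * exp (- \<i> * of_real ((E k - E l) * t / hbar)) * r k l)"
definition p where "p n t = Re (Fn n t)"

lemma sa_rho: "self_adjoint D rho" using dens by (simp add: density_op_def)

lemma r_herm: "r l k = cnj (r k l)"
  unfolding r_def by (rule melem_sa[OF sa_rho])

lemma psd: "0 \<le> Re (\<Sum>k<D. \<Sum>l<D. cnj (b k) * r k l * b l)"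
proof -
  define v where "v = (\<lambda>i. \<Sum>l<D. b l * e l i)"
  have "(\<Sum>k<D. \<Sum>l<D. cnj (b k) * r k l * b l) = melem D v rho v"
    unfolding v_def melem_lincomb r_def ..
  thus ?thesis using dens by (simp add: density_op_def melem_def)
qed

lemma x_nonneg: "k < D \<Longrightarrow> 0 \<le> x k"
proof -
  assume k: "k < D"
  have "(\<Sum>k'<D. \<Sum>l<D. cnj (if k' = k then 1 else 0) * r k' l * (if l = k then 1 else 0))
     = (\<Sum>k'<D. (if k' = k then 1 else 0) * r k' k)"
    using k by (intro sum.cong refl) (simp add: sum_ind_r)
  also have "\<dots> = r k k" using k by (simp add: sum_ind_l)
  finally have "(\<Sum>k'<D. \<Sum>l<D. cnj (if k' = k then 1 else 0) * r k' l * (if l = k then 1 else 0)) = r k k" .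
  thus ?thesis using psd[of "\<lambda>j. if j = k then 1 else 0"] by (simp add: x_def)
qed

lemma r_diag: "r k k = of_real (x k)"
proof -
  have "cnj (r k k) = r k k" using r_herm[of k k] by simp
  thus ?thesis unfolding x_def by (metis Reals_cnj_iff of_real_Re)
qed

lemma r_bound: 
  assumes "k < D" "l < D"
  shows "(cmod (r k l))^2 \<le> x k * x l"
proof (cases "k = l")
  case True thus ?thesis using r_diag[of k] by (simp add: power2_eq_square abs_mult_self_eq)
next
  case False
  show ?thesis
  proof (rule quad_psd)
    fix s t :: complex
    define b where "b = (\<lambda>j. (if j = k then s else 0) + (if j = l then t else 0))"
    have inner: "(\<Sum>l'<D. r k' l' * b l') = r k' k * s + r k' l * t" for k'
      using assms by (simp add: b_def distrib_left sum.distrib sum_ind_r)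
    have cb: "cnj (b k') = (if k' = k then cnj s else 0) + (if k' = l then cnj t else 0)" for k'
      by (simp add: b_def)
    have "(\<Sum>k'<D. \<Sum>l'<D. cnj (b k') * r k' l' * b l') = (\<Sum>k'<D. cnj (b k') * (r k' k * s + r k' l * t))"
      by (simp add: mult.assoc sum_distrib_left[symmetric] inner)
    also have "\<dots> = (\<Sum>k'<D. ((if k' = k then cnj s else 0) + (if k' = l then cnj t else 0)) * (r k' k * s + r k' l * t))"
      by (simp only: cb)
    also have "\<dots> = cnj s * (r k k * s + r k l * t) + cnj t * (r l k * s + r l l * t)"
      using assms by (simp only: distrib_right sum.distrib sum_ind_l)
    also have "\<dots> = cnj s * s * x k + cnj s * t * r k l + cnj t * s * cnj (r k l) + cnj t * t * x l"
      by (simp add: r_diag r_herm[of l k] algebra_simps)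
    finally show "0 \<le> Re (cnj s * s * x k + cnj s * t * r k l + cnj t * s * cnj (r k l) + cnj t * t * x l)"
      using psd[of b] by simp
  qed (use assms x_nonneg in auto)
qed

lemma trace_x: "(\<Sum>k<D. x k) = 1"
proof -
  have "(\<Sum>k<D. r k k) = (\<Sum>i<D. rho i i)" unfolding r_def by (rule trace_basis[OF ONe])
  also have "\<dots> = 1" using dens by (simp add: density_op_def)
  finally show ?thesis unfolding x_def by (metis Re_sum one_complex.sel(1))
qed

lemma W_nonneg: "0 \<le> W n k" by (simp add: W_def)

lemma W_cnj: "of_real (W n k) = U n k * cnj (U n k)"
  by (simp only: W_def complex_norm_square)

lemma W_col: "k < D \<Longrightarrow> (\<Sum>n<D. W n k) = 1"
proof -
  assume k: "k < D"
  have "(\<Sum>n<D. of_real (W n k)) = (1::complex)"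
    using col_sum[OF ONe ONe' unit k] by (simp add: W_cnj U_def)
  thus ?thesis by (metis of_real_eq_1_iff of_real_sum)
qed

lemma W_row: "n < D \<Longrightarrow> (\<Sum>k<D. W n k) = 1"
proof -
  assume n: "n < D"
  have "(\<Sum>k<D. of_real (W n k)) = (1::complex)"
    using row_sum[OF ONe ONe' unit n] by (simp add: W_cnj U_def)
  thus ?thesis by (metis of_real_eq_1_iff of_real_sum)
qed

definition bb where "bb n t l = cnj (U n l) * exp (\<i> * of_real (E l * t / hbar))"

lemma Fn_psd_form: "Fn n t = (\<Sum>k<D. \<Sum>l<D. cnj (bb n t k) * r k l * bb n t l)"
  unfolding Fn_def
proof (intro sum.cong refl)
  fix k l
  have "exp (- \<i> * of_real ((E k - E l) * t / hbar)) = exp (- \<i> * of_real (E k * t / hbar)) * exp (\<i> * of_real (E l * t / hbar))"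
    by (simp add: exp_add[symmetric] diff_divide_distrib left_diff_distrib algebra_simps)
  moreover have "cnj (exp (\<i> * of_real (E k * t / hbar))) = exp (- \<i> * of_real (E k * t / hbar))"
    by (simp add: exp_cnj)
  ultimately show "U n k * cnj (U n l) * exp (- \<i> * of_real ((E k - E l) * t / hbar)) * r k l = cnj (bb n t k) * r k l * bb n t l"
    by (simp add: bb_def mult_ac)
qed

lemma p_nonneg: "0 \<le> p n t"
  unfolding p_def Fn_psd_form by (rule psd)

lemma Fn_real: "Fn n t \<in> \<real>"
proof -
  have "cnj (Fn n t) = (\<Sum>k<D. \<Sum>l<D. bb n t k * cnj (r k l) * cnj (bb n t l))"
    unfolding Fn_psd_form by simp
  also have "\<dots> = (\<Sum>k<D. \<Sum>l<D. cnj (bb n t l) * r l k * bb n t k)"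
  proof (intro sum.cong refl)
    fix k l
    show "bb n t k * cnj (r k l) * cnj (bb n t l) = cnj (bb n t l) * r l k * bb n t k"
      using r_herm[of l k] by (simp add: mult_ac)
  qed
  also have "\<dots> = (\<Sum>l<D. \<Sum>k<D. cnj (bb n t l) * r l k * bb n t k)" by (rule sum.swap)
  also have "\<dots> = Fn n t" unfolding Fn_psd_form ..
  finally show ?thesis by (simp add: Reals_cnj_iff)
qed

lemma Fn_of_real: "Fn n t = of_real (p n t)"
  unfolding p_def using Fn_real by simp

definition om where "om k l = - (E k - E l) / hbar"

lemma Fn_trig: "Fn n t = (\<Sum>k<D. \<Sum>l<D. a n k l * exp (\<i> * of_real (om k l * t)))"
  unfolding Fn_def
proof (intro sum.cong refl)
  fix k l
  have "- \<i> * of_real ((E k - E l) * t / hbar) = \<i> * of_real (om k l * t)"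
    by (simp add: om_def algebra_simps)
  thus "U n k * cnj (U n l) * exp (- \<i> * of_real ((E k - E l) * t / hbar)) * r k l = a n k l * exp (\<i> * of_real (om k l * t))"
    by (simp add: a_def mult_ac)
qed

lemma Fn_tpoly: "tpoly (Fn n)"
proof -
  have "tpoly (\<lambda>t. \<Sum>k<D. \<Sum>l<D. a n k l * exp (\<i> * of_real (om k l * t)))"
    by (intro tpoly_sum tpoly_term) auto
  moreover have "Fn n = (\<lambda>t. \<Sum>k<D. \<Sum>l<D. a n k l * exp (\<i> * of_real (om k l * t)))"
    using Fn_trig by auto
  ultimately show ?thesis by simp
qed

lemma om_zero: "k < D \<Longrightarrow> l < D \<Longrightarrow> om k l = 0 \<longleftrightarrow> k = l"
proof -
  assume kl: "k < D" "l < D"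
  have "om k l = 0 \<longleftrightarrow> E k = E l" using hbar by (auto simp: om_def)
  thus ?thesis using inj_onD[OF injE, of k l] kl by auto
qed

lemma freq_eq:
  assumes "k < D" "l < D" "k' < D" "l' < D"
  shows "om k l = om k' l' \<longleftrightarrow> (k = l \<and> k' = l') \<or> (k \<noteq> l \<and> k = k' \<and> l = l')"
proof -
  have h: "om k l = om k' l' \<longleftrightarrow> E k - E l = E k' - E l'"
    using hbar by (auto simp: om_def)
  show ?thesis
  proof
    assume "om k l = om k' l'"
    hence eq: "E k - E l = E k' - E l'" using h by simp
    show "(k = l \<and> k' = l') \<or> (k \<noteq> l \<and> k = k' \<and> l = l')"
    proof (cases "E k - E l = 0")
      case True
      hence "E k = E l" "E k' = E l'" using eq by auto
      thus ?thesis using inj_onD[OF injE, of k l] inj_onD[OF injE, of k' l'] assms by auto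
    next
      case False
      hence "k = k' \<and> l = l'" using gaps assms eq unfolding nondegenerate_gaps_def by blast
      thus ?thesis using False by auto
    qed
  next
    assume "(k = l \<and> k' = l') \<or> (k \<noteq> l \<and> k = k' \<and> l = l')"
    thus "om k l = om k' l'" by (auto simp: om_def)
  qed
qed

end


context fixedN begin

definition II where "II = {..<D} \<times> {..<D}"
definition ca where "ca n i = a n (fst i) (snd i)"
definition wo where "wo i = om (fst i) (snd i)"

lemma finite_II: "finite II" by (simp add: II_def)

lemma sum_II: "(\<Sum>i\<in>II. g i) = (\<Sum>k<D. \<Sum>l<D. g (k,l))"
  unfolding II_def by (simp add: sum.cartesian_product)

lemma Fn_II: "Fn n t = (\<Sum>i\<in>II. ca n i * exp (\<i> * of_real (wo i * t)))"
  unfolding sum_II Fn_trig by (simp add: ca_def wo_def)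

lemma a_diag: "a n k k = of_real (W n k * x k)"
  by (simp add: a_def r_diag W_cnj[symmetric] mult_ac)

lemma a_norm: "(cmod (a n k l))^2 = W n k * W n l * (cmod (r k l))^2"
  by (simp add: a_def W_def norm_mult power_mult_distrib)

lemma a_bound: "k < D \<Longrightarrow> l < D \<Longrightarrow> (cmod (a n k l))^2 \<le> (W n k * x k) * (W n l * x l)"
proof -
  assume kl: "k < D" "l < D"
  have "(cmod (a n k l))^2 = W n k * W n l * (cmod (r k l))^2" by (rule a_norm)
  also have "\<dots> \<le> W n k * W n l * (x k * x l)"
    by (rule mult_left_mono[OF r_bound[OF kl]]) (simp add: W_nonneg)
  finally show ?thesis by (simp add: mult_ac)
qed

lemma q_nonneg: "0 \<le> q n"
  unfolding q_def by (intro sum_nonneg mult_nonneg_nonneg W_nonneg x_nonneg) auto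

lemma mean_Fn: "hasmean (Fn n) (of_real (q n))"
proof -
  have hm: "hasmean (\<lambda>t. \<Sum>i\<in>II. ca n i * exp (\<i> * of_real (wo i * t))) (\<Sum>i\<in>II. if wo i = 0 then ca n i else 0)"
    by (rule hasmean_sum[OF finite_II])
  have "(\<Sum>i\<in>II. if wo i = 0 then ca n i else 0) = (\<Sum>k<D. \<Sum>l<D. if k = l then a n k l else 0)"
    unfolding sum_II by (intro sum.cong refl) (auto simp: wo_def ca_def om_zero)
  also have "\<dots> = (\<Sum>k<D. a n k k)" by (simp add: sum.delta)
  also have "\<dots> = of_real (q n)" by (simp add: a_diag q_def)
  finally have "hasmean (\<lambda>t. \<Sum>i\<in>II. ca n i * exp (\<i> * of_real (wo i * t))) (of_real (q n))"
    using hm by simp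
  moreover have "Fn n = (\<lambda>t. \<Sum>i\<in>II. ca n i * exp (\<i> * of_real (wo i * t)))"
    using Fn_II by auto
  ultimately show ?thesis by simp
qed

definition S2 where "S2 n = (\<Sum>k<D. \<Sum>l<D. if k = l then 0 else (cmod (a n k l))^2)"

lemma S2_bound: "S2 n \<le> (q n)^2"
proof -
  have "S2 n \<le> (\<Sum>k<D. \<Sum>l<D. (cmod (a n k l))^2)"
    unfolding S2_def by (intro sum_mono) auto
  also have "\<dots> \<le> (\<Sum>k<D. \<Sum>l<D. (W n k * x k) * (W n l * x l))"
    by (intro sum_mono a_bound) auto
  also have "\<dots> = (q n)^2"
    by (simp add: q_def power2_eq_square sum_product)
  finally show ?thesis .
qed

lemma FF_II: "Fn n t * cnj (Fn n t) = (\<Sum>ij\<in>II \<times> II. (ca n (fst ij) * cnj (ca n (snd ij))) * exp (\<i> * of_real ((wo (fst ij) - wo (snd ij)) * t)))"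
proof -
  have "Fn n t * cnj (Fn n t) = (\<Sum>i\<in>II. \<Sum>j\<in>II. (ca n i * exp (\<i> * of_real (wo i * t))) * cnj (ca n j * exp (\<i> * of_real (wo j * t))))"
    unfolding Fn_II by (simp add: sum_product)
  also have "\<dots> = (\<Sum>i\<in>II. \<Sum>j\<in>II. (ca n i * cnj (ca n j)) * exp (\<i> * of_real ((wo i - wo j) * t)))"
  proof (intro sum.cong refl)
    fix i j
    have "exp (\<i> * of_real ((wo i - wo j) * t)) = exp (\<i> * of_real (wo i * t)) * exp (- (\<i> * of_real (wo j * t)))"
      by (simp add: exp_add[symmetric] left_diff_distrib algebra_simps)
    moreover have "cnj (exp (\<i> * of_real (wo j * t))) = exp (- (\<i> * of_real (wo j * t)))"
      by (simp add: exp_cnj)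
    ultimately show "(ca n i * exp (\<i> * of_real (wo i * t))) * cnj (ca n j * exp (\<i> * of_real (wo j * t))) = (ca n i * cnj (ca n j)) * exp (\<i> * of_real ((wo i - wo j) * t))"
      by (simp add: mult_ac)
  qed
  also have "\<dots> = (\<Sum>ij\<in>II \<times> II. (ca n (fst ij) * cnj (ca n (snd ij))) * exp (\<i> * of_real ((wo (fst ij) - wo (snd ij)) * t)))"
    by (simp add: sum.cartesian_product split_def)
  finally show ?thesis .
qed

lemma delta_sum: "k < D \<Longrightarrow> (\<Sum>l<D. if k = l then g l else 0) = (g k :: complex)"
  by (simp add: sum.delta)

lemma mean_FF: "hasmean (\<lambda>t. Fn n t * cnj (Fn n t)) (of_real ((q n)^2 + S2 n))"
proof -
  have hm: "hasmean (\<lambda>t. \<Sum>ij\<in>II \<times> II. (ca n (fst ij) * cnj (ca n (snd ij))) * exp (\<i> * of_real ((wo (fst ij) - wo (snd ij)) * t)))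
     (\<Sum>ij\<in>II \<times> II. if wo (fst ij) - wo (snd ij) = 0 then ca n (fst ij) * cnj (ca n (snd ij)) else 0)"
    by (rule hasmean_sum) (simp add: finite_II)
  have "(\<Sum>ij\<in>II \<times> II. if wo (fst ij) - wo (snd ij) = 0 then ca n (fst ij) * cnj (ca n (snd ij)) else 0)
      = (\<Sum>i\<in>II. \<Sum>j\<in>II. if wo i = wo j then ca n i * cnj (ca n j) else 0)"
    unfolding sum.cartesian_product by (simp add: split_def)
  also have "\<dots> = (\<Sum>k<D. \<Sum>l<D. \<Sum>k'<D. \<Sum>l'<D. 
        (if k = l \<and> k' = l' then a n k l * cnj (a n k' l') else 0)
      + (if k \<noteq> l \<and> k = k' \<and> l = l' then a n k l * cnj (a n k' l') else 0))"
    unfolding sum_II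
  proof (intro sum.cong refl)
    fix k l k' l' assume "k \<in> {..<D}" "l \<in> {..<D}" "k' \<in> {..<D}" "l' \<in> {..<D}"
    hence fe: "om k l = om k' l' \<longleftrightarrow> (k = l \<and> k' = l') \<or> (k \<noteq> l \<and> k = k' \<and> l = l')"
      by (intro freq_eq) auto
    show "(if wo (k, l) = wo (k', l') then ca n (k, l) * cnj (ca n (k', l')) else 0) =
        (if k = l \<and> k' = l' then a n k l * cnj (a n k' l') else 0)
      + (if k \<noteq> l \<and> k = k' \<and> l = l' then a n k l * cnj (a n k' l') else 0)"
      unfolding wo_def ca_def using fe by auto
  qed
  also have "\<dots> = (\<Sum>k<D. \<Sum>l<D. (if k = l then a n k k * (\<Sum>k'<D. cnj (a n k' k')) else 0)
      + (if k \<noteq> l then a n k l * cnj (a n k l) else 0))"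
  proof (intro sum.cong refl)
    fix k l assume kl: "k \<in> {..<D}" "l \<in> {..<D}"
    have 1: "(\<Sum>k'<D. \<Sum>l'<D. if k = l \<and> k' = l' then a n k l * cnj (a n k' l') else 0)
        = (if k = l then a n k k * (\<Sum>k'<D. cnj (a n k' k')) else 0)"
    proof (cases "k = l")
      case True
      have "(\<Sum>k'<D. \<Sum>l'<D. if k = l \<and> k' = l' then a n k l * cnj (a n k' l') else 0)
          = (\<Sum>k'<D. a n k k * cnj (a n k' k'))"
        using True by (intro sum.cong refl) (simp add: delta_sum)
      thus ?thesis using True by (simp add: sum_distrib_left)
    qed simp
    have 2: "(\<Sum>k'<D. \<Sum>l'<D. if k \<noteq> l \<and> k = k' \<and> l = l' then a n k l * cnj (a n k' l') else 0)
        = (if k \<noteq> l then a n k l * cnj (a n k l) else 0)"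
    proof (cases "k = l")
      case False
      have "(\<Sum>k'<D. \<Sum>l'<D. if k \<noteq> l \<and> k = k' \<and> l = l' then a n k l * cnj (a n k' l') else 0)
          = (\<Sum>k'<D. if k = k' then a n k l * cnj (a n k' l) else 0)"
        using False kl by (intro sum.cong refl) (simp add: delta_sum)
      also have "\<dots> = a n k l * cnj (a n k l)" using kl by (simp add: delta_sum)
      finally show ?thesis using False by simp
    qed simp
    show "(\<Sum>k'<D. \<Sum>l'<D. (if k = l \<and> k' = l' then a n k l * cnj (a n k' l') else 0)
      + (if k \<noteq> l \<and> k = k' \<and> l = l' then a n k l * cnj (a n k' l') else 0))
      = (if k = l then a n k k * (\<Sum>k'<D. cnj (a n k' k')) else 0)
      + (if k \<noteq> l then a n k l * cnj (a n k l) else 0)"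
      by (simp only: sum.distrib 1 2)
  qed
  also have "\<dots> = (\<Sum>k<D. \<Sum>l<D. if k = l then a n k k * (\<Sum>k'<D. cnj (a n k' k')) else 0)
       + (\<Sum>k<D. \<Sum>l<D. if k \<noteq> l then a n k l * cnj (a n k l) else 0)"
    by (simp only: sum.distrib)
  also have "\<dots> = (\<Sum>k<D. a n k k) * (\<Sum>k'<D. cnj (a n k' k')) + of_real (S2 n)"
  proof -
    have e1: "(\<Sum>k<D. \<Sum>l<D. if k = l then a n k k * (\<Sum>k'<D. cnj (a n k' k')) else 0)
        = (\<Sum>k<D. a n k k * (\<Sum>k'<D. cnj (a n k' k')))"
      by (intro sum.cong refl) (simp add: delta_sum)
    have e2: "(\<Sum>k<D. \<Sum>l<D. if k \<noteq> l then a n k l * cnj (a n k l) else 0) = of_real (S2 n)"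
      unfolding S2_def of_real_sum
      by (intro sum.cong refl) (simp add: complex_norm_square[symmetric] del: of_real_power)
    show ?thesis unfolding e1 e2 by (simp add: sum_distrib_right)
  qed
  also have "\<dots> = of_real ((q n)^2 + S2 n)"
  proof -
    have "(\<Sum>k<D. a n k k) = of_real (q n)" by (simp add: a_diag q_def)
    moreover have "(\<Sum>k'<D. cnj (a n k' k')) = cnj (\<Sum>k<D. a n k k)" by simp
    ultimately show ?thesis by (simp add: power2_eq_square)
  qed
  finally have "hasmean (\<lambda>t. \<Sum>ij\<in>II \<times> II. (ca n (fst ij) * cnj (ca n (snd ij))) * exp (\<i> * of_real ((wo (fst ij) - wo (snd ij)) * t)))
     (of_real ((q n)^2 + S2 n))" using hm by simp
  moreover have "(\<lambda>t. Fn n t * cnj (Fn n t)) = (\<lambda>t. \<Sum>ij\<in>II \<times> II. (ca n (fst ij) * cnj (ca n (snd ij))) * exp (\<i> * of_real ((wo (fst ij) - wo (snd ij)) * t)))"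
    using FF_II by auto
  ultimately show ?thesis by simp
qed

lemma q_zero_p: 
  assumes "q n = 0"
  shows "p n t = 0"
proof -
  have "\<forall>k\<in>{..<D}. W n k * x k = 0"
    using assms unfolding q_def by (subst sum_nonneg_eq_0_iff[symmetric]) (auto intro!: mult_nonneg_nonneg W_nonneg x_nonneg)
  hence "a n k l = 0" if "k < D" "l < D" for k l
  proof -
    have "W n k * x k = 0" "W n l * x l = 0" using that \<open>\<forall>k\<in>{..<D}. W n k * x k = 0\<close> by auto
    hence z: "W n k * x k * (W n l * x l) = 0" by simp
    have "(cmod (a n k l))^2 \<le> 0" using a_bound[OF that, of n] z by linarith
    thus ?thesis by simp
  qed
  hence "Fn n t = 0" unfolding Fn_trig by simp
  thus ?thesis by (simp add: p_def)
qed

end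


lemma xlog_lower:
  fixes y q :: real assumes "y \<ge> 0" "q > 0"
  shows "y * ln q + y - q \<le> y * ln y"
proof (cases "y = 0")
  case True thus ?thesis using assms by simp
next
  case False
  hence y: "y > 0" using assms by simp
  have "ln (q / y) \<le> q / y - 1" using ln_le_minus_one[of "q/y"] y assms by simp
  hence "ln q - ln y \<le> q / y - 1" using y assms by (simp add: ln_divide_pos)
  hence "y * (ln q - ln y) \<le> y * (q / y - 1)" using y by (simp add: mult_left_mono)
  thus ?thesis using y by (simp add: algebra_simps)
qed

lemma xlog_upper:
  fixes y q :: real assumes "y \<ge> 0" "q > 0"
  shows "y * ln y \<le> (ln q - 1) * y + (1 / q) * y^2"
proof (cases "y = 0")
  case True thus ?thesis using assms by simp
next
  case False
  hence y: "y > 0" using assms by simp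
  have "ln (y / q) \<le> y / q - 1" using ln_le_minus_one[of "y/q"] y assms by simp
  hence "ln y - ln q \<le> y / q - 1" using y assms by (simp add: ln_divide_pos)
  hence "y * (ln y - ln q) \<le> y * (y / q - 1)" using y by (simp add: mult_left_mono)
  thus ?thesis using y by (simp add: algebra_simps power2_eq_square)
qed

lemma rmean_const: "rmean (\<lambda>t. c) c"
proof -
  have "\<forall>\<^sub>F T in at_top. c = integral {0..T} (\<lambda>t. c) / T"
    using eventually_gt_at_top[of "0::real"] by eventually_elim simp
  thus ?thesis unfolding rmean_def by (rule Lim_transform_eventually[OF tendsto_const])
qed

lemma rmean_cmult: assumes "rmean f m" shows "rmean (\<lambda>t. c * f t) (c * m)"
  using tendsto_mult_left[OF assms[unfolded rmean_def], of c] unfolding rmean_def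
  by (simp add: integral_mult_right)

lemma rmean_sum:
  assumes "finite I" "\<And>i. i \<in> I \<Longrightarrow> rmean (f i) (m i)" "\<And>i T. i \<in> I \<Longrightarrow> f i integrable_on {0..T}"
  shows "rmean (\<lambda>t. \<Sum>i\<in>I. f i t) (\<Sum>i\<in>I. m i)"
  using assms
proof (induction I rule: finite_induct)
  case empty thus ?case using rmean_const[of 0] by simp
next
  case (insert y F)
  have "rmean (\<lambda>t. f y t + (\<Sum>i\<in>F. f i t)) (m y + (\<Sum>i\<in>F. m i))"
    by (rule rmean_add) (use insert in \<open>auto intro!: integrable_sum\<close>)
  thus ?case using insert by simp
qed

context fixedN begin

lemma Fn_cont: "continuous_on UNIV (Fn n)" by (rule tpoly_cont[OF Fn_tpoly])

lemma p_cont: "continuous_on UNIV (p n)"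
proof -
  have "continuous_on UNIV (\<lambda>t. Re (Fn n t))" by (intro continuous_intros Fn_cont)
  thus ?thesis by (simp add: p_def[abs_def])
qed

lemma p_integrable: "(\<lambda>t. h (p n t)) integrable_on {0..T}" if "continuous_on UNIV h" for h :: "real \<Rightarrow> real"
proof -
  have "continuous_on UNIV (\<lambda>t. h (p n t))" by (rule continuous_on_compose2[OF that p_cont]) auto
  hence "continuous_on {0..T} (\<lambda>t. h (p n t))" by (rule continuous_on_subset) simp
  thus ?thesis by (rule integrable_continuous_real)
qed

lemma glnp_cont: "continuous_on UNIV (\<lambda>t. p n t * ln (p n t))"
  by (rule continuous_on_compose2[OF xlnx_cont p_cont]) (auto simp: p_nonneg)

lemma rmean_p: "rmean (p n) (q n)"
  using hasmean_rmean[OF Fn_cont mean_Fn[of n]] by (simp add: p_def[abs_def])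

lemma rmean_p2: "rmean (\<lambda>t. (p n t)^2) ((q n)^2 + S2 n)"
proof -
  have c: "continuous_on UNIV (\<lambda>t. Fn n t * cnj (Fn n t))" by (intro continuous_intros Fn_cont)
  have "rmean (\<lambda>t. Re (Fn n t * cnj (Fn n t))) ((q n)^2 + S2 n)"
    using hasmean_rmean[OF c mean_FF[of n]] by simp
  moreover have "Re (Fn n t * cnj (Fn n t)) = (p n t)^2" for t
    by (simp add: Fn_of_real[of n t] power2_eq_square)
  ultimately show ?thesis by simp
qed

definition cB where "cB n = (if q n > 0 then ln (q n) - 1 else 0)"
definition dB where "dB n = (if q n > 0 then 1 / q n else 0)"
definition Bn where "Bn n t = cB n * p n t + dB n * (p n t)^2"

lemma Bn_upper: "p n t * ln (p n t) \<le> Bn n t"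
proof (cases "q n > 0")
  case True thus ?thesis using xlog_upper[OF p_nonneg True] by (simp add: Bn_def cB_def dB_def)
next
  case False
  hence "q n = 0" using q_nonneg[of n] by simp
  hence "p n t = 0" by (rule q_zero_p)
  thus ?thesis by (simp add: Bn_def)
qed

lemma Bn_cont: "continuous_on UNIV (Bn n)"
proof -
  have "continuous_on UNIV (\<lambda>t. cB n * p n t + dB n * (p n t)^2)" by (intro continuous_intros p_cont)
  thus ?thesis by (simp add: Bn_def[abs_def])
qed

lemma rmean_Bn: "rmean (Bn n) (cB n * q n + dB n * ((q n)^2 + S2 n))"
proof -
  have "rmean (\<lambda>t. cB n * p n t + dB n * (p n t)^2) (cB n * q n + dB n * ((q n)^2 + S2 n))"
  proof (rule rmean_add)
    show "rmean (\<lambda>t. cB n * p n t) (cB n * q n)" by (rule rmean_cmult[OF rmean_p])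
    show "rmean (\<lambda>t. dB n * (p n t)^2) (dB n * ((q n)^2 + S2 n))" by (rule rmean_cmult[OF rmean_p2])
    show "(\<lambda>t. cB n * p n t) integrable_on {0..T}" for T
      by (rule p_integrable) (intro continuous_intros)
    show "(\<lambda>t. dB n * (p n t)^2) integrable_on {0..T}" for T
      by (rule p_integrable[of "\<lambda>y. dB n * y^2"]) (intro continuous_intros)
  qed
  thus ?thesis by (simp add: Bn_def[abs_def])
qed

lemma mBn_bound: "cB n * q n + dB n * ((q n)^2 + S2 n) \<le> q n * ln (q n) + q n"
proof (cases "q n > 0")
  case True
  have "dB n * ((q n)^2 + S2 n) \<le> (1 / q n) * (2 * (q n)^2)"
    using True S2_bound[of n] by (simp add: dB_def divide_right_mono)
  also have "\<dots> = 2 * q n" using True by (simp add: power2_eq_square)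
  finally show ?thesis using True by (simp add: cB_def algebra_simps)
next
  case False
  hence "q n = 0" using q_nonneg[of n] by simp
  thus ?thesis by (simp add: cB_def dB_def)
qed

lemma sum_q: "(\<Sum>n<D. q n) = 1"
proof -
  have "(\<Sum>n<D. q n) = (\<Sum>k<D. (\<Sum>n<D. W n k) * x k)"
    unfolding q_def by (subst sum.swap) (simp add: sum_distrib_right)
  also have "\<dots> = (\<Sum>k<D. x k)" by (intro sum.cong refl) (simp add: W_col)
  finally show ?thesis using trace_x by simp
qed

lemma jensen_n: "n < D \<Longrightarrow> q n * ln (q n) \<le> (\<Sum>k<D. W n k * (x k * ln (x k)))"
proof -
  assume n: "n < D"
  show ?thesis
  proof (cases "q n > 0")
    case True
    have "(\<Sum>k<D. W n k * (x k * ln (q n) + x k - q n)) \<le> (\<Sum>k<D. W n k * (x k * ln (x k)))"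
      by (intro sum_mono mult_left_mono xlog_lower x_nonneg True W_nonneg) auto
    moreover have "(\<Sum>k<D. W n k * (x k * ln (q n) + x k - q n)) = q n * ln (q n) + q n - q n * (\<Sum>k<D. W n k)"
    proof -
      have "(\<Sum>k<D. W n k * (x k * ln (q n) + x k - q n)) = (\<Sum>k<D. (W n k * x k) * ln (q n) + W n k * x k - q n * W n k)"
        by (intro sum.cong refl) (simp add: algebra_simps)
      also have "\<dots> = (\<Sum>k<D. W n k * x k) * ln (q n) + (\<Sum>k<D. W n k * x k) - q n * (\<Sum>k<D. W n k)"
        by (simp only: sum.distrib sum_subtractf sum_distrib_left sum_distrib_right)
      also have "\<dots> = q n * ln (q n) + q n - q n * (\<Sum>k<D. W n k)"
        by (simp add: q_def mult.commute)
      finally show ?thesis .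
    qed
    ultimately show ?thesis using W_row[OF n] by simp
  next
    case False
    hence q0: "q n = 0" using q_nonneg[of n] by simp
    have "\<forall>k\<in>{..<D}. W n k * x k = 0"
      using q0 unfolding q_def by (subst sum_nonneg_eq_0_iff[symmetric]) (auto intro!: mult_nonneg_nonneg W_nonneg x_nonneg)
    hence "(\<Sum>k<D. W n k * (x k * ln (x k))) = 0"
      by (intro sum.neutral) (auto simp: mult.assoc[symmetric])
    thus ?thesis using q0 by simp
  qed
qed

lemma jensen: "(\<Sum>n<D. q n * ln (q n)) \<le> (\<Sum>k<D. x k * ln (x k))"
proof -
  have "(\<Sum>n<D. q n * ln (q n)) \<le> (\<Sum>n<D. \<Sum>k<D. W n k * (x k * ln (x k)))"
    by (intro sum_mono jensen_n) auto
  also have "\<dots> = (\<Sum>k<D. (\<Sum>n<D. W n k) * (x k * ln (x k)))"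
    by (subst sum.swap) (simp add: sum_distrib_right)
  also have "\<dots> = (\<Sum>k<D. x k * ln (x k))" by (intro sum.cong refl) (simp add: W_col)
  finally show ?thesis .
qed

end


context fixedN begin

definition Sp where "Sp t = diag_entropy D (\<lambda>n. p n t)"

lemma Sp_cont: "continuous_on UNIV Sp"
proof -
  have "continuous_on UNIV (\<lambda>t. - (\<Sum>n<D. p n t * ln (p n t)))"
    by (intro continuous_on_minus continuous_on_sum glnp_cont)
  thus ?thesis by (simp add: Sp_def[abs_def] diag_entropy_def)
qed

lemma Sp_integrable: "Sp integrable_on {0..T}"
  by (rule integrable_continuous_real[OF continuous_on_subset[OF Sp_cont subset_UNIV]])

definition K where "K = 1 + (\<Sum>n<D. \<Sum>k<D. \<Sum>l<D. cmod (a n k l))"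

lemma p_le_K: "n < D \<Longrightarrow> p n t \<le> K"
proof -
  assume n: "n < D"
  have "p n t \<le> cmod (Fn n t)" unfolding p_def by (rule complex_Re_le_cmod)
  also have "\<dots> \<le> (\<Sum>k<D. \<Sum>l<D. cmod (a n k l * exp (\<i> * of_real (om k l * t))))"
    unfolding Fn_trig by (rule order.trans[OF norm_sum sum_mono[OF norm_sum]])
  also have "\<dots> = (\<Sum>k<D. \<Sum>l<D. cmod (a n k l))" by (simp add: norm_mult)
  also have "\<dots> \<le> (\<Sum>n<D. \<Sum>k<D. \<Sum>l<D. cmod (a n k l))"
    by (rule member_le_sum[of n "{..<D}" "\<lambda>n. \<Sum>k<D. \<Sum>l<D. cmod (a n k l)"]) (auto intro!: sum_nonneg simp: n)
  finally show ?thesis unfolding K_def by simp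
qed

lemma Sp_mean: "\<exists>m. rmean Sp m"
proof (rule rmean_uniform[OF Sp_integrable])
  fix e :: real assume e: "e > 0"
  have Kpos: "K > 0" unfolding K_def by (simp add: add_pos_nonneg sum_nonneg)
  have cont: "continuous_on {0..K} (\<lambda>y::real. y * ln y)"
    by (rule continuous_on_subset[OF xlnx_cont]) auto
  obtain P where P: "real_polynomial_function P" "\<And>y. y \<in> {0..K} \<Longrightarrow> \<bar>y * ln y - P y\<bar> < e / (D + 1)"
    using Stone_Weierstrass_real_polynomial_function[OF compact_Icc cont, of "e / (D + 1)"] e by auto
  define GG where "GG = (\<lambda>t. (-1) * (\<Sum>n<D. complex_of_real (P (Re (Fn n t)))))"
  have tp: "tpoly GG" unfolding GG_def
    by (intro tpoly_scale tpoly_sum tpoly_poly[OF P(1) Fn_tpoly Fn_real]) auto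
  then obtain mm where mm: "hasmean GG mm" using tpoly_mean by blast
  have G: "rmean (\<lambda>t. Re (GG t)) (Re mm)" by (rule hasmean_rmean[OF tpoly_cont[OF tp] mm])
  have Gc: "continuous_on UNIV (\<lambda>t. Re (GG t))" by (intro continuous_intros tpoly_cont[OF tp])
  have GRe: "Re (GG t) = - (\<Sum>n<D. P (p n t))" for t by (simp add: GG_def p_def)
  show "\<exists>g m. rmean g m \<and> (\<forall>T. g integrable_on {0..T}) \<and> (\<forall>t\<ge>0. \<bar>Sp t - g t\<bar> \<le> e)"
  proof (intro exI conjI allI impI)
    show "rmean (\<lambda>t. Re (GG t)) (Re mm)" by (rule G)
    show "(\<lambda>t. Re (GG t)) integrable_on {0..T}" for T
      by (rule integrable_continuous_real[OF continuous_on_subset[OF Gc subset_UNIV]])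
    fix t :: real
    have "\<bar>Sp t - Re (GG t)\<bar> = \<bar>\<Sum>n<D. (P (p n t) - p n t * ln (p n t))\<bar>"
      by (simp add: Sp_def diag_entropy_def GRe sum_subtractf)
    also have "\<dots> \<le> (\<Sum>n<D. \<bar>P (p n t) - p n t * ln (p n t)\<bar>)" by (rule sum_abs)
    also have "\<dots> \<le> (\<Sum>n<D. e / (D + 1))"
    proof (rule sum_mono)
      fix n assume "n \<in> {..<D}"
      hence "p n t \<in> {0..K}" using p_le_K p_nonneg by auto
      thus "\<bar>P (p n t) - p n t * ln (p n t)\<bar> \<le> e / (D + 1)" using P(2) by force
    qed
    also have "\<dots> = D * (e / (D + 1))" by simp
    also have "\<dots> \<le> e" using e by (simp add: field_simps)
    finally show "\<bar>Sp t - Re (GG t)\<bar> \<le> e" .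
  qed
qed

lemma fixed_bound: "diag_entropy D x - time_avg Sp \<le> 1"
proof -
  obtain m where m: "rmean Sp m" using Sp_mean by blast
  have tav: "time_avg Sp = m" by (rule rmean_time_avg[OF m])
  define mB where "mB n = cB n * q n + dB n * ((q n)^2 + S2 n)" for n
  have L: "rmean (\<lambda>t. (-1) * (\<Sum>n<D. Bn n t)) ((-1) * (\<Sum>n<D. mB n))"
    by (intro rmean_cmult rmean_sum) (auto simp: mB_def rmean_Bn
        intro: integrable_continuous_real[OF continuous_on_subset[OF Bn_cont subset_UNIV]])
  have Lc: "continuous_on UNIV (\<lambda>t. (-1) * (\<Sum>n<D. Bn n t))"
    by (intro continuous_intros Bn_cont)
  have "(-1) * (\<Sum>n<D. mB n) \<le> m"
  proof (rule rmean_le[OF L m])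
    show "(\<lambda>t. (-1) * (\<Sum>n<D. Bn n t)) integrable_on {0..T}" for T
      by (rule integrable_continuous_real[OF continuous_on_subset[OF Lc subset_UNIV]])
    show "Sp integrable_on {0..T}" for T by (rule Sp_integrable)
    fix t :: real
    have "(\<Sum>n<D. p n t * ln (p n t)) \<le> (\<Sum>n<D. Bn n t)" by (intro sum_mono Bn_upper)
    thus "(-1) * (\<Sum>n<D. Bn n t) \<le> Sp t" by (simp add: Sp_def diag_entropy_def)
  qed
  moreover have "(\<Sum>n<D. mB n) \<le> (\<Sum>n<D. q n * ln (q n) + q n)"
    by (intro sum_mono) (simp add: mB_def mBn_bound)
  moreover have "(\<Sum>n<D. q n * ln (q n) + q n) \<le> (\<Sum>k<D. x k * ln (x k)) + 1"
    using jensen sum_q by (simp add: sum.distrib)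
  ultimately show ?thesis using tav by (simp add: diag_entropy_def)
qed

lemma fixed_bound_explicit:
  "diag_entropy D (\<lambda>n. Re (melem D (e n) rho (e n)))
    - time_avg (\<lambda>\<tau>. diag_entropy D (\<lambda>n. Re (\<Sum>k<D. \<Sum>l<D.
            melem D (e' n) V (e k) * cnj (melem D (e' n) V (e l))
            * exp (- \<i> * complex_of_real ((E k - E l) * \<tau> / hbar))
            * melem D (e k) rho (e l)))) \<le> 1"
proof -
  have "(\<lambda>\<tau>. diag_entropy D (\<lambda>n. Re (\<Sum>k<D. \<Sum>l<D.
            melem D (e' n) V (e k) * cnj (melem D (e' n) V (e l))
            * exp (- \<i> * complex_of_real ((E k - E l) * \<tau> / hbar))
            * melem D (e k) rho (e l)))) = Sp"
    by (simp add: fun_eq_iff Sp_def p_def Fn_def U_def r_def)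
  moreover have "(\<lambda>n. Re (melem D (e n) rho (e n))) = x" by (simp add: fun_eq_iff x_def r_def)
  ultimately show ?thesis using fixed_bound by simp
qed

end

theorem corollary1:
  fixes d :: nat and hbar :: real and c :: real
    and H H' rho V :: "nat \<Rightarrow> cmat"
    and e e' :: "nat \<Rightarrow> nat \<Rightarrow> cvec"
    and E E' :: "nat \<Rightarrow> nat \<Rightarrow> real"
  assumes d2: "d \<ge> 2"
    and hbar: "hbar > 0"
    and sa_H: "\<And>N. N \<ge> 1 \<Longrightarrow> self_adjoint (d ^ N) (H N)"
    and sa_H': "\<And>N. N \<ge> 1 \<Longrightarrow> self_adjoint (d ^ N) (H' N)"
    and dens: "\<And>N. N \<ge> 1 \<Longrightarrow> density_op (d ^ N) (rho N)"
    and unit: "\<And>N. N \<ge> 1 \<Longrightarrow> unitary_mat (d ^ N) (V N)"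
    and eb: "\<And>N. N \<ge> 1 \<Longrightarrow> eigenbasis (d ^ N) (H N) (e N) (E N)"
    and eb': "\<And>N. N \<ge> 1 \<Longrightarrow> eigenbasis (d ^ N) (H' N) (e' N) (E' N)"
    and A: "\<And>N. N \<ge> 1 \<Longrightarrow> nondegenerate (d ^ N) (E N) \<and> nondegenerate (d ^ N) (E' N)"
    and B: "\<And>N. N \<ge> 1 \<Longrightarrow> nondegenerate_gaps (d ^ N) (E N) \<and> nondegenerate_gaps (d ^ N) (E' N)"
    and c: "c > 0"
    and Deff: "\<And>N. N \<ge> 1 \<Longrightarrow>
        1 / (\<Sum>n<d ^ N. (Re (melem (d ^ N) (e N n) (rho N) (e N n)))\<^sup>2) \<ge> exp (c * real N)"
  shows "Limsup sequentially (\<lambda>N. ereal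
     ((diag_entropy (d ^ N) (\<lambda>n. Re (melem (d ^ N) (e N n) (rho N) (e N n)))
       - time_avg (\<lambda>\<tau>. diag_entropy (d ^ N) (\<lambda>n. Re (\<Sum>k<d ^ N. \<Sum>l<d ^ N.
            melem (d ^ N) (e' N n) (V N) (e N k) * cnj (melem (d ^ N) (e' N n) (V N) (e N l))
            * exp (- \<i> * complex_of_real ((E N k - E N l) * \<tau> / hbar))
            * melem (d ^ N) (e N k) (rho N) (e N l)))))
      / real N)) \<le> 0"
proof -
  have bnd: "diag_entropy (d ^ N) (\<lambda>n. Re (melem (d ^ N) (e N n) (rho N) (e N n)))
       - time_avg (\<lambda>\<tau>. diag_entropy (d ^ N) (\<lambda>n. Re (\<Sum>k<d ^ N. \<Sum>l<d ^ N.
            melem (d ^ N) (e' N n) (V N) (e N k) * cnj (melem (d ^ N) (e' N n) (V N) (e N l))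
            * exp (- \<i> * complex_of_real ((E N k - E N l) * \<tau> / hbar))
            * melem (d ^ N) (e N k) (rho N) (e N l)))) \<le> 1" if N1: "N \<ge> 1" for N
  proof -
    interpret fixedN "d ^ N" "rho N" "V N" "e N" "e' N" "E N" hbar
    proof
      show "hbar > 0" by (rule hbar)
      show "density_op (d ^ N) (rho N)" by (rule dens[OF N1])
      show "unitary_mat (d ^ N) (V N)" by (rule unit[OF N1])
      show "ONB (d ^ N) (e N)" using eb[OF N1] by (simp add: eigenbasis_def ONB_def)
      show "ONB (d ^ N) (e' N)" using eb'[OF N1] by (simp add: eigenbasis_def ONB_def)
      show "inj_on (E N) {..<d ^ N}" using A[OF N1] by (simp add: nondegenerate_def)
      show "nondegenerate_gaps (d ^ N) (E N)" using B[OF N1] by simp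
    qed
    show ?thesis by (rule fixed_bound_explicit)
  qed
  let ?f = "\<lambda>N. ereal
     ((diag_entropy (d ^ N) (\<lambda>n. Re (melem (d ^ N) (e N n) (rho N) (e N n)))
       - time_avg (\<lambda>\<tau>. diag_entropy (d ^ N) (\<lambda>n. Re (\<Sum>k<d ^ N. \<Sum>l<d ^ N.
            melem (d ^ N) (e' N n) (V N) (e N k) * cnj (melem (d ^ N) (e' N n) (V N) (e N l))
            * exp (- \<i> * complex_of_real ((E N k - E N l) * \<tau> / hbar))
            * melem (d ^ N) (e N k) (rho N) (e N l)))))
      / real N)"
  have ev: "\<forall>\<^sub>F N in sequentially. ?f N \<le> ereal (1 / real N)"
    using eventually_ge_at_top[of "1::nat"]
  proof eventually_elim
    case (elim N)
    thus ?case using bnd[OF elim] by (simp add: divide_right_mono)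
  qed
  have "Limsup sequentially ?f \<le> Limsup sequentially (\<lambda>N. ereal (1 / real N))"
    by (rule Limsup_mono[OF ev])
  also have "Limsup sequentially (\<lambda>N. ereal (1 / real N)) = ereal 0"
    by (rule lim_imp_Limsup) (simp_all add: lim_const_over_n)
  finally show ?thesis by (simp add: zero_ereal_def)
qed

end
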